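(* Let $k\ge 2$ and let $T_1,\dots,T_k$ be finite sets. Let $\widetilde H=(\widetilde h_{j,i})_{1\le i,j\le k}$ be a $k\times k$ lower-triangular matrix of nonnegative integers with zero diagonal. Suppose there exists a reference structure $(f_2,\dots,f_k)$ on the chain $T_k\to\cdots\to T_1$ whose linear join matrix equals $\widetilde H$. Then: (L1) $\widetilde h_{j,i}\le \min_{i\le n\le j}|T_n|$ for all $1\le i<j\le k$; (L2) $\widetilde h_{i+1,i}\ge \widetilde h_{i+2,i}\ge\cdots\ge \widetilde h_{k,i}$ for all $1\le i\le k-1$; (L3) $\widetilde h_{j,1}\le \widetilde h_{j,2}\le\cdots\le \widetilde h_{j,j-1}$ for all $2\le j\le k$; (L4) $\widetilde h_{j,i+1}-\widetilde h_{j+1,i+1}\ge \widetilde h_{j,i}-\widetilde h_{j+1,i}$ for all indices with $1\le i<j-1<k-1$ (i.e. $i+1<j<k$).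
   Context: A reference structure on the chain $T_k\to\cdots\to T_1$ is a family of partial functions $f_n:T_n\rightharpoonup T_{n-1}$ for $2\le n\le k$ (each tuple $t\in T_n$ references at most one tuple $f_n(t)\in T_{n-1}$; "$t$ references $t'$" means $f_n(t)=t'$). For $1\le i<j\le k$, a tuple $t\in T_i$ is a root of $T_j\to\cdots\to T_i$ if there exist $t_{i+1}\in T_{i+1},\dots,t_j\in T_j$ with $f_n(t_n)=t_{n-1}$ for all $i<n\le j$, where $t_i=t$. Let $S_{j,i}\subseteq T_i$ be the set of such roots and $h_{j,i}=|S_{j,i}|$. The linear join matrix of the reference structure is the $k\times k$ lower-triangular matrix $H$ with entries $h_{j,i}$ for $j>i$ and $0$ on and above the diagonal. *)

theory Defs
  imports Main
begin

text \<open>A reference structure assigns to each level n (2 \<le> n \<le> k) a partial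
  function f n : T n \<rightharpoonup> T (n-1), modelled as an option-valued map
  that is undefined (None) outside T n and takes values in T (n-1).\<close>

definition reference_structure ::
  "nat \<Rightarrow> (nat \<Rightarrow> 'a set) \<Rightarrow> (nat \<Rightarrow> 'a \<Rightarrow> 'a option) \<Rightarrow> bool" where
  "reference_structure k T f \<longleftrightarrow>
     (\<forall>n\<in>{2..k}. \<forall>t.
        (t \<notin> T n \<longrightarrow> f n t = None) \<and>
        (\<forall>t'. f n t = Some t' \<longrightarrow> t' \<in> T (n - 1)))"

definition is_root ::
  "(nat \<Rightarrow> 'a set) \<Rightarrow> (nat \<Rightarrow> 'a \<Rightarrow> 'a option) \<Rightarrow> nat \<Rightarrow> nat \<Rightarrow> 'a \<Rightarrow> bool" where
  "is_root T f j i t \<longleftrightarrow> t \<in> T i \<and>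
     (\<exists>ts :: nat \<Rightarrow> 'a. ts i = t \<and>
        (\<forall>n\<in>{i+1..j}. ts n \<in> T n \<and> f n (ts n) = Some (ts (n - 1))))"

definition roots ::
  "(nat \<Rightarrow> 'a set) \<Rightarrow> (nat \<Rightarrow> 'a \<Rightarrow> 'a option) \<Rightarrow> nat \<Rightarrow> nat \<Rightarrow> 'a set" where
  "roots T f j i = {t. is_root T f j i t}"

definition linear_join_matrix ::
  "nat \<Rightarrow> (nat \<Rightarrow> 'a set) \<Rightarrow> (nat \<Rightarrow> 'a \<Rightarrow> 'a option) \<Rightarrow> nat \<Rightarrow> nat \<Rightarrow> nat" where
  "linear_join_matrix k T f j i =
     (if 1 \<le> i \<and> i < j \<and> j \<le> k then card (roots T f j i) else 0)"

end

theory Submission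
  imports Defs
begin

lemma root_down:
  assumes "is_root T f j i t" "i < j"
  obtains s where "is_root T f j (Suc i) s" "f (Suc i) s = Some t"
proof -
  from assms obtain ts where ts: "t \<in> T i" "ts i = t"
    "\<forall>n\<in>{i+1..j}. ts n \<in> T n \<and> f n (ts n) = Some (ts (n-1))"
    by (auto simp: is_root_def)
  have si: "Suc i \<in> {i+1..j}" using assms(2) by simp
  have c1: "ts (Suc i) \<in> T (Suc i)" "f (Suc i) (ts (Suc i)) = Some t"
    using bspec[OF ts(3) si] ts(2) by auto
  have c2: "\<forall>n\<in>{Suc i+1..j}. ts n \<in> T n \<and> f n (ts n) = Some (ts (n-1))"
    using ts(3) by simp
  have "is_root T f j (Suc i) (ts (Suc i))" unfolding is_root_def
    apply (rule conjI[OF c1(1)])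
    apply (rule exI[of _ ts])
    using c2 by simp
  moreover have "f (Suc i) (ts (Suc i)) = Some t" using c1 by blast
  ultimately show ?thesis using that by blast
qed

lemma root_up:
  assumes "is_root T f j (Suc i) s" "f (Suc i) s = Some t" "t \<in> T i"
  shows "is_root T f j i t"
proof -
  from assms obtain ts where ts: "ts (Suc i) = s"
    "\<forall>n\<in>{Suc i+1..j}. ts n \<in> T n \<and> f n (ts n) = Some (ts (n-1))" "s \<in> T (Suc i)"
    by (auto simp: is_root_def)
  have ch: "\<forall>n\<in>{i+1..j}. (ts(i := t)) n \<in> T n \<and> f n ((ts(i := t)) n) = Some ((ts(i := t)) (n - 1))"
  proof
    fix n assume n: "n \<in> {i+1..j}"
    show "(ts(i := t)) n \<in> T n \<and> f n ((ts(i := t)) n) = Some ((ts(i := t)) (n - 1))"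
    proof (cases "n = Suc i")
      case True thus ?thesis using ts(1,3) assms(2,3) by simp
    next
      case False
      hence "n \<in> {Suc i+1..j}" using n by simp
      moreover have "n \<noteq> i" "n - 1 \<noteq> i" using n False by auto
      ultimately show ?thesis using ts(2) by simp
    qed
  qed
  show ?thesis unfolding is_root_def
    apply (rule conjI[OF assms(3)])
    apply (rule exI[of _ "ts(i:=t)"])
    apply (rule conjI)
     apply simp
    by (rule ch)
qed

lemma roots_sub: "roots T f j i \<subseteq> T i"
  by (auto simp: roots_def is_root_def)

lemma roots_mono: "roots T f (Suc j) i \<subseteq> roots T f j i"
proof
  fix t assume "t \<in> roots T f (Suc j) i"
  then obtain ts where "t \<in> T i" "ts i = t"
    "\<forall>n\<in>{i+1..Suc j}. ts n \<in> T n \<and> f n (ts n) = Some (ts (n - 1))"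
    unfolding roots_def is_root_def by blast
  moreover have "{i+1..j} \<subseteq> {i+1..Suc j}" by auto
  ultimately show "t \<in> roots T f j i" unfolding roots_def is_root_def
    apply -
    apply (rule CollectI)
    apply (rule conjI, assumption)
    apply (rule exI[of _ ts])
    by auto
qed

lemma chain_unique:
  fixes i j m :: nat
  assumes A: "\<forall>n\<in>{i+1..j}. ts n \<in> T n \<and> f n (ts n) = Some (ts (n-1))"
    and B: "\<forall>n\<in>{i+1..j}. us n \<in> T n \<and> f n (us n) = Some (us (n-1))"
    and "i \<le> m" "m \<le> j" "ts m = us m"
  shows "ts i = us i"
  using assms(3,4,5)
proof (induction m)
  case 0 then show ?case by simp
next
  case (Suc m)
  show ?case
  proof (cases "i = Suc m")
    case True then show ?thesis using Suc.prems(3) by simp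
  next
    case False
    hence im: "i \<le> m" using Suc.prems(1) by simp
    have mem: "Suc m \<in> {i+1..j}" using im Suc.prems(2) by simp
    have f1: "f (Suc m) (ts (Suc m)) = Some (ts m)" using bspec[OF A mem] by simp
    have f2: "f (Suc m) (us (Suc m)) = Some (us m)" using bspec[OF B mem] by simp
    have "ts m = us m" using f1 f2 Suc.prems(3) by simp
    then show ?thesis using Suc.IH im Suc.prems(2) by simp
  qed
qed

definition chainQ where
  "chainQ T f j i t ts \<longleftrightarrow> ts i = t \<and>
        (\<forall>n\<in>{i+1..j}. ts n \<in> T n \<and> f n (ts n) = Some (ts (n - 1)))"

lemma roots_card_le:
  assumes "i \<le> m" "m \<le> j" "finite (T m)"
  shows "card (roots T f j i) \<le> card (T m)"
proof -
  define sel where "sel t = (SOME ts. chainQ T f j i t ts) m" for t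
  have P: "chainQ T f j i t (SOME ts. chainQ T f j i t ts)"
    if "t \<in> roots T f j i" for t
  proof -
    have "\<exists>ts. chainQ T f j i t ts" using that unfolding roots_def is_root_def chainQ_def by blast
    thus ?thesis by (rule someI_ex)
  qed
  have inj: "inj_on sel (roots T f j i)"
  proof (rule inj_onI)
    fix x y assume x: "x \<in> roots T f j i" and y: "y \<in> roots T f j i" and e: "sel x = sel y"
    define a where "a = (SOME ts. chainQ T f j i x ts)"
    define b where "b = (SOME ts. chainQ T f j i y ts)"
    have pa: "chainQ T f j i x a" using P[OF x] a_def by simp
    have pb: "chainQ T f j i y b" using P[OF y] b_def by simp
    have "a m = b m" using e unfolding sel_def a_def b_def .
    then have "a i = b i" using pa pb chain_unique[OF _ _ assms(1,2)] unfolding chainQ_def by blast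
    thus "x = y" using pa pb unfolding chainQ_def by simp
  qed
  have img: "sel ` roots T f j i \<subseteq> T m"
  proof
    fix s assume "s \<in> sel ` roots T f j i"
    then obtain t where t: "t \<in> roots T f j i" "s = sel t" by auto
    define a where "a = (SOME ts. chainQ T f j i t ts)"
    have pa: "chainQ T f j i t a" using P[OF t(1)] a_def by simp
    have sa: "s = a m" using t(2) unfolding sel_def a_def by simp
    show "s \<in> T m"
    proof (cases "m = i")
      case True then show ?thesis using pa sa t(1) roots_sub unfolding chainQ_def by fastforce
    next
      case False then show ?thesis using pa sa assms unfolding chainQ_def by auto
    qed
  qed
  show ?thesis using card_inj_on_le[OF inj img assms(3)] .
qed

theorem theorem1:
  fixes k :: nat and T :: "nat \<Rightarrow> 'a set" and H :: "nat \<Rightarrow> nat \<Rightarrow> nat"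
  assumes "k \<ge> 2"
    and "\<forall>n\<in>{1..k}. finite (T n)"
    and "\<forall>i\<in>{1..k}. \<forall>j\<in>{1..k}. j \<le> i \<longrightarrow> H j i = 0"
    and "\<exists>f. reference_structure k T f \<and>
           (\<forall>i\<in>{1..k}. \<forall>j\<in>{1..k}. H j i = linear_join_matrix k T f j i)"
  shows "(\<forall>i j. 1 \<le> i \<and> i < j \<and> j \<le> k \<longrightarrow> H j i \<le> Min ((\<lambda>n. card (T n)) ` {i..j}))
       \<and> (\<forall>i j. 1 \<le> i \<and> i < j \<and> j < k \<longrightarrow> H j i \<ge> H (j + 1) i)
       \<and> (\<forall>i j. 1 \<le> i \<and> i + 1 < j \<and> j \<le> k \<longrightarrow> H j i \<le> H j (i + 1))
       \<and> (\<forall>i j. 1 \<le> i \<and> i + 1 < j \<and> j < k \<longrightarrow>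
            int (H j (i + 1)) - int (H (j + 1) (i + 1)) \<ge> int (H j i) - int (H (j + 1) i))"
proof -
  obtain f where rs: "reference_structure k T f"
    and Hf: "\<forall>i\<in>{1..k}. \<forall>j\<in>{1..k}. H j i = linear_join_matrix k T f j i"
    using assms(4) by blast
  let ?R = "roots T f"
  have HR: "H j i = card (?R j i)" if "1 \<le> i" "i < j" "j \<le> k" for i j
    using Hf that by (auto simp: linear_join_matrix_def)
  have fin: "finite (?R j i)" if "1 \<le> i" "i \<le> k" for i j
    using assms(2) that roots_sub by (meson atLeastAtMost_iff finite_subset)
  have rng: "t \<in> T i" if "f (Suc i) s = Some t" "1 \<le> i" "i < k" for s t i
  proof -
    have "Suc i \<in> {2..k}" using that by simp
    then have "\<forall>t. (t \<notin> T (Suc i) \<longrightarrow> f (Suc i) t = None) \<and>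
            (\<forall>t'. f (Suc i) t = Some t' \<longrightarrow> t' \<in> T (Suc i - 1))"
      using rs unfolding reference_structure_def by blast
    then show ?thesis using that(1) by simp
  qed
  have surj: "?R j i - ?R (Suc j) i \<subseteq> (\<lambda>s. the (f (Suc i) s)) ` (?R j (Suc i) - ?R (Suc j) (Suc i))"
    if "1 \<le> i" "Suc i < j" "j < k" for i j
  proof
    fix t assume t: "t \<in> ?R j i - ?R (Suc j) i"
    have r: "is_root T f j i t" using t unfolding roots_def by simp
    have ij: "i < j" using that by simp
    obtain s where s: "is_root T f j (Suc i) s" "f (Suc i) s = Some t"
      using root_down[OF r ij] by blast
    have "s \<notin> ?R (Suc j) (Suc i)"
    proof
      assume "s \<in> ?R (Suc j) (Suc i)"
      hence "is_root T f (Suc j) i t" using root_up[of T f "Suc j" i s t] s rng that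
        unfolding roots_def by auto
      thus False using t unfolding roots_def by auto
    qed
    thus "t \<in> (\<lambda>s. the (f (Suc i) s)) ` (?R j (Suc i) - ?R (Suc j) (Suc i))"
      using s unfolding roots_def by (auto intro!: image_eqI[of _ _ s])
  qed
  have surj2: "?R j i \<subseteq> (\<lambda>s. the (f (Suc i) s)) ` ?R j (Suc i)"
    if "1 \<le> i" "Suc i < j" for i j
  proof
    fix t assume t: "t \<in> ?R j i"
    have r: "is_root T f j i t" using t unfolding roots_def by simp
    have ij: "i < j" using that by simp
    obtain s where s: "is_root T f j (Suc i) s" "f (Suc i) s = Some t"
      using root_down[OF r ij] by blast
    thus "t \<in> (\<lambda>s. the (f (Suc i) s)) ` ?R j (Suc i)"
      unfolding roots_def by (auto intro!: image_eqI[of _ _ s])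
  qed
  have L1: "H j i \<le> Min ((\<lambda>n. card (T n)) ` {i..j})" if "1 \<le> i" "i < j" "j \<le> k" for i j
    using that by (auto simp: HR intro!: Min.boundedI roots_card_le assms(2)[rule_format])
  have L2: "H j i \<ge> H (j + 1) i" if "1 \<le> i" "i < j" "j < k" for i j
    using that HR[of i j] HR[of i "j+1"] roots_mono[of T f j i] fin[of i j]
    by (simp add: card_mono)
  have L3: "H j i \<le> H j (i + 1)" if "1 \<le> i" "i + 1 < j" "j \<le> k" for i j
  proof -
    have "card (?R j i) \<le> card ((\<lambda>s. the (f (Suc i) s)) ` ?R j (Suc i))"
      using surj2[of i j] that by (intro card_mono finite_imageI fin) auto
    also have "\<dots> \<le> card (?R j (Suc i))" by (rule card_image_le) (use fin that in auto)
    finally show ?thesis using that HR[of i j] HR[of "i+1" j] by simp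
  qed
  have L4: "int (H j (i + 1)) - int (H (j + 1) (i + 1)) \<ge> int (H j i) - int (H (j + 1) i)"
    if "1 \<le> i" "i + 1 < j" "j < k" for i j
  proof -
    have a: "card (?R j i - ?R (Suc j) i) \<le> card (?R j (Suc i) - ?R (Suc j) (Suc i))"
    proof -
      have "card (?R j i - ?R (Suc j) i) \<le> card ((\<lambda>s. the (f (Suc i) s)) ` (?R j (Suc i) - ?R (Suc j) (Suc i)))"
        using surj[of i j] that fin[of "Suc i" j] by (intro card_mono finite_imageI) auto
      also have "\<dots> \<le> card (?R j (Suc i) - ?R (Suc j) (Suc i))"
        by (rule card_image_le) (use fin that in auto)
      finally show ?thesis .
    qed
    have fA: "finite (?R (Suc j) i)" "finite (?R (Suc j) (Suc i))" "finite (?R j i)" "finite (?R j (Suc i))"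
      using fin that by simp_all
    have sA: "?R (Suc j) i \<subseteq> ?R j i" "?R (Suc j) (Suc i) \<subseteq> ?R j (Suc i)"
      by (rule roots_mono)+
    have b1: "card (?R j i - ?R (Suc j) i) = card (?R j i) - card (?R (Suc j) i)"
      using card_Diff_subset[OF fA(1) sA(1)] .
    have b2: "card (?R j (Suc i) - ?R (Suc j) (Suc i)) = card (?R j (Suc i)) - card (?R (Suc j) (Suc i))"
      using card_Diff_subset[OF fA(2) sA(2)] .
    have c1: "card (?R (Suc j) i) \<le> card (?R j i)"
      using card_mono[OF fA(3) sA(1)] .
    have c2: "card (?R (Suc j) (Suc i)) \<le> card (?R j (Suc i))"
      using card_mono[OF fA(4) sA(2)] .
    show ?thesis using a b1 b2 c1 c2 that HR[of i j] HR[of i "j+1"] HR[of "i+1" j] HR[of "i+1" "j+1"]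
      by simp
  qed
  show ?thesis using L1 L2 L3 L4 by blast
qed

end
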